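(* Let $k\le n$ be positive integers, $m=\binom nk$, let $\mu$ be an absolute operator norm on $\mathbb{C}^{m\times m}$, and let $p$ and $r$ be positive integers. Then $$\theta_k(\mu,\ell_p)\le n^{\left[\frac{k}{r}-\frac{k}{p}\right]^+}\theta_k(\mu,\ell_r),$$ where $[x]^+=\max\{x,0\}$.
   Context: $C_k(B)$ is the $k$th compound of $B\in\mathbb{C}^{n\times n}$ (the $\binom nk\times\binom nk$ matrix of $k\times k$ minors). For a vector norm $\nu$ on $\mathbb{C}^n$ and a norm $\mu$ on $\mathbb{C}^{m\times m}$, $\theta_k(\mu,\nu)=\max\{\mu(C_k(B)): B\in\mathbb{C}^{n\times n},\ \nu(\mathrm{col}_i(B))=1,\ i=1,\ldots,n\}$, where $\mathrm{col}_i(B)$ is the $i$th column. $\ell_p$ denotes the vector $p$-norm. An absolute operator norm is a matrix norm induced by an absolute vector norm. *)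

theory Defs
  imports "HOL-Analysis.Analysis"
begin

definition vecs :: "'i set \<Rightarrow> ('i \<Rightarrow> complex) set" where
  "vecs I = {x. \<forall>i. i \<notin> I \<longrightarrow> x i = 0}"

definition is_vnorm :: "'i set \<Rightarrow> (('i \<Rightarrow> complex) \<Rightarrow> real) \<Rightarrow> bool" where
  "is_vnorm I N \<longleftrightarrow>
     (\<forall>x\<in>vecs I. 0 \<le> N x \<and> (N x = 0 \<longleftrightarrow> x = (\<lambda>_. 0))) \<and>
     (\<forall>x\<in>vecs I. \<forall>c::complex. N (\<lambda>i. c * x i) = cmod c * N x) \<and>
     (\<forall>x\<in>vecs I. \<forall>y\<in>vecs I. N (\<lambda>i. x i + y i) \<le> N x + N y)"

definition is_absolute_vnorm :: "'i set \<Rightarrow> (('i \<Rightarrow> complex) \<Rightarrow> real) \<Rightarrow> bool" where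
  "is_absolute_vnorm I N \<longleftrightarrow> is_vnorm I N \<and>
     (\<forall>x\<in>vecs I. \<forall>y\<in>vecs I. (\<forall>i. cmod (x i) = cmod (y i)) \<longrightarrow> N x = N y)"

definition matvec :: "'i set \<Rightarrow> ('i \<Rightarrow> 'i \<Rightarrow> complex) \<Rightarrow> ('i \<Rightarrow> complex) \<Rightarrow> ('i \<Rightarrow> complex)" where
  "matvec I A x = (\<lambda>i. if i \<in> I then (\<Sum>j\<in>I. A i j * x j) else 0)"

definition opnorm :: "'i set \<Rightarrow> (('i \<Rightarrow> complex) \<Rightarrow> real) \<Rightarrow> ('i \<Rightarrow> 'i \<Rightarrow> complex) \<Rightarrow> real" where
  "opnorm I N A = Sup {N (matvec I A x) / N x | x. x \<in> vecs I \<and> x \<noteq> (\<lambda>_. 0)}"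

definition lp_norm :: "nat \<Rightarrow> real \<Rightarrow> (nat \<Rightarrow> complex) \<Rightarrow> real" where
  "lp_norm n p x = (\<Sum>i<n. cmod (x i) powr p) powr (1 / p)"

text \<open>The k-subsets of {0..<n}; they index the rows/columns of the k-th compound
  (m = n choose k of them).\<close>
definition ksubsets :: "nat \<Rightarrow> nat \<Rightarrow> nat set set" where
  "ksubsets n k = {A. A \<subseteq> {..<n} \<and> card A = k}"

definition minor :: "nat \<Rightarrow> (nat \<Rightarrow> nat \<Rightarrow> complex) \<Rightarrow> nat set \<Rightarrow> nat set \<Rightarrow> complex" where
  "minor k B A S = (\<Sum>\<sigma> | \<sigma> permutes {..<k}. of_int (sign \<sigma>) *
      (\<Prod>i<k. B (sorted_list_of_set A ! i) (sorted_list_of_set S ! \<sigma> i)))"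

definition compound :: "nat \<Rightarrow> (nat \<Rightarrow> nat \<Rightarrow> complex) \<Rightarrow> nat set \<Rightarrow> nat set \<Rightarrow> complex" where
  "compound k B = (\<lambda>A S. minor k B A S)"

definition col :: "nat \<Rightarrow> (nat \<Rightarrow> nat \<Rightarrow> complex) \<Rightarrow> nat \<Rightarrow> (nat \<Rightarrow> complex)" where
  "col n B i = (\<lambda>r. if r < n then B r i else 0)"

text \<open>theta_k(mu, nu) for n \<times> n matrices (max realized as Sup; the set is compact).\<close>
definition theta :: "nat \<Rightarrow> nat \<Rightarrow> ((nat set \<Rightarrow> nat set \<Rightarrow> complex) \<Rightarrow> real)
                      \<Rightarrow> ((nat \<Rightarrow> complex) \<Rightarrow> real) \<Rightarrow> real" where
  "theta n k \<mu> \<nu> = Sup {\<mu> (compound k B) | B. (\<forall>i<n. \<nu> (col n B i) = 1)}"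

end

theory Submission
  imports Defs
begin


lemma vnorm_zero:
  assumes "is_vnorm I N" shows "N (\<lambda>_. 0) = 0"
  using assms unfolding is_vnorm_def vecs_def by auto

lemma vnorm_nonneg:
  assumes "is_vnorm I N" "x \<in> vecs I" shows "0 \<le> N x"
  using assms unfolding is_vnorm_def by auto

lemma vnorm_pos:
  assumes "is_vnorm I N" "x \<in> vecs I" "x \<noteq> (\<lambda>_. 0)" shows "0 < N x"
  using assms unfolding is_vnorm_def by (metis order_le_less)

lemma vnorm_scale:
  assumes "is_vnorm I N" "x \<in> vecs I" shows "N (\<lambda>i. c * x i) = cmod c * N x"
  using assms unfolding is_vnorm_def by auto

lemma vnorm_tri:
  assumes "is_vnorm I N" "x \<in> vecs I" "y \<in> vecs I" shows "N (\<lambda>i. x i + y i) \<le> N x + N y"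
  using assms unfolding is_vnorm_def by auto

lemma vecs_mult: "x \<in> vecs I \<Longrightarrow> (\<lambda>i. u i * x i) \<in> vecs I"
  unfolding vecs_def by auto

lemma unit_avg:
  fixes u :: complex assumes "cmod u \<le> 1"
  shows "\<exists>w1 w2. cmod w1 = 1 \<and> cmod w2 = 1 \<and> u = (w1 + w2) / 2"
proof -
  define s where "s = (if u = 0 then 1 else u / cmod u)"
  define t where "t = sqrt (1 - (cmod u)^2)"
  have s1: "cmod s = 1" unfolding s_def by (simp add: norm_divide)
  have us: "u = s * cmod u" unfolding s_def by simp
  have t2: "t^2 = 1 - (cmod u)^2" unfolding t_def using assms
    using norm_ge_zero[of u] by (simp add: power_le_one)
  have "cmod (complex_of_real (cmod u) + \<i> * t) = 1" "cmod (complex_of_real (cmod u) - \<i> * t) = 1"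
    using t2 by (simp_all add: cmod_def)
  then have "cmod (s * (cmod u + \<i> * t)) = 1" "cmod (s * (cmod u - \<i> * t)) = 1"
    using s1 by (simp_all add: norm_mult)
  moreover have "u = (s * (cmod u + \<i> * t) + s * (cmod u - \<i> * t)) / 2"
    using us by (simp add: algebra_simps)
  ultimately show ?thesis by blast
qed

lemma abs_scale_le1:
  assumes "is_absolute_vnorm I N" "x \<in> vecs I" "\<And>i. cmod (u i) \<le> 1"
  shows "N (\<lambda>i. u i * x i) \<le> N x"
proof -
  have vn: "is_vnorm I N" using assms(1) unfolding is_absolute_vnorm_def by auto
  have ab: "\<And>y z. y \<in> vecs I \<Longrightarrow> z \<in> vecs I \<Longrightarrow> (\<forall>i. cmod (y i) = cmod (z i)) \<Longrightarrow> N y = N z"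
    using assms(1) unfolding is_absolute_vnorm_def by blast
  obtain w1 w2 where w: "\<And>i. cmod (w1 i) = 1" "\<And>i. cmod (w2 i) = 1" "\<And>i. u i = (w1 i + w2 i) / 2"
    using unit_avg[OF assms(3)] by metis
  have e: "(\<lambda>i. u i * x i) = (\<lambda>i. (1/2) * ((\<lambda>i. w1 i * x i) i + (\<lambda>i. w2 i * x i) i))"
  proof
    fix i show "u i * x i = (1/2) * (w1 i * x i + w2 i * x i)" by (simp add: w(3)[of i] field_simps)
  qed
  have m1: "(\<lambda>i. w1 i * x i) \<in> vecs I" "(\<lambda>i. w2 i * x i) \<in> vecs I" using vecs_mult assms(2) by auto
  have s: "(\<lambda>i. (\<lambda>i. w1 i * x i) i + (\<lambda>i. w2 i * x i) i) \<in> vecs I"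
    using assms(2) unfolding vecs_def by auto
  have "N (\<lambda>i. u i * x i) = cmod (1/2) * N (\<lambda>i. (\<lambda>i. w1 i * x i) i + (\<lambda>i. w2 i * x i) i)"
    unfolding e by (rule vnorm_scale[OF vn s])
  also have "\<dots> \<le> (1/2) * (N (\<lambda>i. w1 i * x i) + N (\<lambda>i. w2 i * x i))"
    using vnorm_tri[OF vn m1] by simp
  also have "N (\<lambda>i. w1 i * x i) = N x" by (rule ab[OF m1(1) assms(2)]) (simp add: norm_mult w)
  also have "N (\<lambda>i. w2 i * x i) = N x" by (rule ab[OF m1(2) assms(2)]) (simp add: norm_mult w)
  finally show ?thesis by simp
qed

lemma abs_scale_le:
  assumes "is_absolute_vnorm I N" "x \<in> vecs I" "\<And>i. cmod (u i) \<le> M"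
  shows "N (\<lambda>i. u i * x i) \<le> M * N x"
proof -
  have vn: "is_vnorm I N" using assms(1) unfolding is_absolute_vnorm_def by auto
  have M0: "0 \<le> M" using assms(3)[of undefined] norm_ge_zero order_trans by blast
  show ?thesis
  proof (cases "M = 0")
    case True
    then have "u = (\<lambda>_. 0)" using assms(3) by (intro ext) (metis norm_le_zero_iff)
    then show ?thesis using vnorm_zero[OF vn] True by simp
  next
    case False
    then have Mp: "M > 0" using M0 by simp
    have "N (\<lambda>i. u i * x i) = N (\<lambda>i. complex_of_real M * (\<lambda>i. (u i / M) * x i) i)"
      using Mp by (intro arg_cong[where f=N] ext) (auto simp: field_simps)
    also have "\<dots> = M * N (\<lambda>i. (u i / M) * x i)"
      using vnorm_scale[OF vn vecs_mult[OF assms(2)], of "complex_of_real M" "\<lambda>i. u i / M"] Mp by simp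
    also have "\<dots> \<le> M * N x"
    proof -
      have "N (\<lambda>i. (u i / M) * x i) \<le> N x"
      proof (rule abs_scale_le1[OF assms(1,2)])
        fix i show "cmod (u i / complex_of_real M) \<le> 1" using assms(3)[of i] Mp by (simp add: norm_divide)
      qed
      then show ?thesis using Mp by simp
    qed
    finally show ?thesis .
  qed
qed

lemma vnorm_sum:
  assumes "is_vnorm I N" "finite J" "\<And>j. j \<in> J \<Longrightarrow> f j \<in> vecs I"
  shows "N (\<lambda>i. \<Sum>j\<in>J. f j i) \<le> (\<Sum>j\<in>J. N (f j))"
  using assms(2,3)
proof (induction J rule: finite_induct)
  case empty then show ?case using vnorm_zero[OF assms(1)] by simp
next
  case (insert a F)
  have mem: "(\<lambda>i. \<Sum>j\<in>F. f j i) \<in> vecs I" using insert.prems unfolding vecs_def by auto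
  have "N (\<lambda>i. \<Sum>j\<in>insert a F. f j i) = N (\<lambda>i. f a i + (\<lambda>i. \<Sum>j\<in>F. f j i) i)"
    using insert.hyps by simp
  also have "\<dots> \<le> N (f a) + N (\<lambda>i. \<Sum>j\<in>F. f j i)"
    using vnorm_tri[OF assms(1) _ mem, of "f a"] insert.prems by (simp add: eta_contract_eq)
  also have "\<dots> \<le> N (f a) + (\<Sum>j\<in>F. N (f j))" using insert by simp
  finally show ?case using insert.hyps by simp
qed



lemma matvec_vecs: "matvec I A x \<in> vecs I"
  unfolding matvec_def vecs_def by auto

lemma matvec_zero: "matvec I A (\<lambda>_. 0) = (\<lambda>_. 0)"
  unfolding matvec_def by auto

lemma opnorm_set_ne:
  assumes "I \<noteq> {}" shows "{N (matvec I A x) / N x | x. x \<in> vecs I \<and> x \<noteq> (\<lambda>_. 0)} \<noteq> {}"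
proof -
  obtain i0 where "i0 \<in> I" using assms by auto
  then have "(\<lambda>i. if i = i0 then 1 else 0) \<in> vecs I" "(\<lambda>i. if i = i0 then (1::complex) else 0) \<noteq> (\<lambda>_. 0)"
    unfolding vecs_def by (auto dest: fun_cong[where x=i0])
  then show ?thesis by blast
qed

lemma opnorm_le:
  assumes "is_vnorm I N" "I \<noteq> {}" "\<And>x. x \<in> vecs I \<Longrightarrow> N (matvec I A x) \<le> K * N x"
  shows "bdd_above {N (matvec I A x) / N x | x. x \<in> vecs I \<and> x \<noteq> (\<lambda>_. 0)}"
    and "opnorm I N A \<le> K"
proof -
  have "\<And>y. y \<in> {N (matvec I A x) / N x | x. x \<in> vecs I \<and> x \<noteq> (\<lambda>_. 0)} \<Longrightarrow> y \<le> K"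
  proof -
    fix y assume "y \<in> {N (matvec I A x) / N x | x. x \<in> vecs I \<and> x \<noteq> (\<lambda>_. 0)}"
    then obtain x where x: "x \<in> vecs I" "x \<noteq> (\<lambda>_. 0)" "y = N (matvec I A x) / N x" by blast
    have "0 < N x" using vnorm_pos[OF assms(1) x(1,2)] .
    then show "y \<le> K" using x assms(3)[OF x(1)] by (simp add: divide_le_eq)
  qed
  then show "bdd_above {N (matvec I A x) / N x | x. x \<in> vecs I \<and> x \<noteq> (\<lambda>_. 0)}"
    by (rule bdd_aboveI)
  show "opnorm I N A \<le> K"
    unfolding opnorm_def by (rule cSup_least[OF opnorm_set_ne[OF assms(2)]]) fact
qed

lemma opnorm_ge:
  assumes "is_vnorm I N" "bdd_above {N (matvec I A x) / N x | x. x \<in> vecs I \<and> x \<noteq> (\<lambda>_. 0)}"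
    "x \<in> vecs I"
  shows "N (matvec I A x) \<le> opnorm I N A * N x"
proof (cases "x = (\<lambda>_. 0)")
  case True
  then show ?thesis unfolding True matvec_zero using vnorm_zero[OF assms(1)] by simp
next
  case False
  have p: "0 < N x" using vnorm_pos[OF assms(1) assms(3) False] .
  have "N (matvec I A x) / N x \<le> opnorm I N A"
    unfolding opnorm_def using assms(2,3) False by (intro cSup_upper) auto
  then show ?thesis using p by (simp add: divide_le_eq)
qed

lemma opnorm_nonneg:
  assumes "is_vnorm I N" "I \<noteq> {}" "bdd_above {N (matvec I A x) / N x | x. x \<in> vecs I \<and> x \<noteq> (\<lambda>_. 0)}"
  shows "0 \<le> opnorm I N A"
proof -
  obtain y where y: "y \<in> {N (matvec I A x) / N x | x. x \<in> vecs I \<and> x \<noteq> (\<lambda>_. 0)}"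
    using opnorm_set_ne[OF assms(2)] by blast
  then have "0 \<le> y" using vnorm_nonneg[OF assms(1)] matvec_vecs by (auto intro!: divide_nonneg_nonneg)
  also have "y \<le> opnorm I N A" unfolding opnorm_def using y assms(3) by (intro cSup_upper)
  finally show ?thesis .
qed

definition ind :: "'i set \<Rightarrow> 'i \<Rightarrow> complex" where "ind I = (\<lambda>i. if i \<in> I then 1 else 0)"
definition ev :: "'i \<Rightarrow> 'i \<Rightarrow> complex" where "ev j = (\<lambda>i. if i = j then 1 else 0)"

lemma entry_bound:
  assumes "is_absolute_vnorm I N" "finite I" "\<And>i j. i \<in> I \<Longrightarrow> j \<in> I \<Longrightarrow> cmod (A i j) \<le> M"
    "x \<in> vecs I"
  shows "N (matvec I A x) \<le> (M * N (ind I) * (\<Sum>j\<in>I. 1 / N (ev j))) * N x"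
proof -
  have vn: "is_vnorm I N" using assms(1) unfolding is_absolute_vnorm_def by auto
  define g where "g j i = (if i \<in> I then A i j * x j else 0)" for j i
  have indv: "ind I \<in> vecs I" unfolding ind_def vecs_def by auto
  have mv: "matvec I A x = (\<lambda>i. \<Sum>j\<in>I. (\<lambda>i. g j i * ind I i) i)"
    unfolding matvec_def g_def ind_def by auto
  have "N (matvec I A x) \<le> (\<Sum>j\<in>I. N (\<lambda>i. g j i * ind I i))"
    unfolding mv by (rule vnorm_sum[OF vn assms(2)]) (rule vecs_mult[OF indv])
  also have "\<dots> \<le> (\<Sum>j\<in>I. (M * (N x / N (ev j))) * N (ind I))"
  proof (rule sum_mono)
    fix j assume j: "j \<in> I"
    have evv: "ev j \<in> vecs I" "ev j \<noteq> (\<lambda>_. 0)" using j unfolding ev_def vecs_def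
      by (auto dest: fun_cong[where x=j])
    have evp: "0 < N (ev j)" using vnorm_pos[OF vn evv] .
    have M0: "0 \<le> M" using assms(3)[OF j j] norm_ge_zero order_trans by blast
    have "cmod (x j) * N (ev j) = N (\<lambda>i. x j * ev j i)" using vnorm_scale[OF vn evv(1)] by simp
    also have "(\<lambda>i. x j * ev j i) = (\<lambda>i. ev j i * x i)" unfolding ev_def by auto
    also have "N \<dots> \<le> N x" by (rule abs_scale_le1[OF assms(1,4)]) (simp add: ev_def)
    finally have xj: "cmod (x j) \<le> N x / N (ev j)" using evp by (simp add: le_divide_eq)
    have "N (\<lambda>i. g j i * ind I i) \<le> (M * cmod (x j)) * N (ind I)"
      by (rule abs_scale_le[OF assms(1) indv]) (simp add: g_def norm_mult assms(3) j mult_right_mono M0)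
    also have "\<dots> \<le> (M * (N x / N (ev j))) * N (ind I)"
      using xj M0 vnorm_nonneg[OF vn indv] by (intro mult_right_mono mult_left_mono)
    finally show "N (\<lambda>i. g j i * ind I i) \<le> (M * (N x / N (ev j))) * N (ind I)" .
  qed
  also have "\<dots> = (M * N (ind I) * (\<Sum>j\<in>I. 1 / N (ev j))) * N x"
    by (simp add: sum_distrib_left sum_distrib_right) (simp add: mult.commute mult.left_commute)
  finally show ?thesis .
qed



lemma lp_sum1:
  assumes "0 < p" "lp_norm n p x = 1" shows "(\<Sum>i<n. cmod (x i) powr p) = 1"
proof -
  let ?S = "(\<Sum>i<n. cmod (x i) powr p)"
  have S0: "0 \<le> ?S" by (intro sum_nonneg) simp
  have "?S = (?S powr (1/p)) powr p" using S0 assms(1) by (simp add: powr_powr)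
  also have "\<dots> = 1" using assms(2) unfolding lp_norm_def by simp
  finally show ?thesis .
qed

lemma lp_entry_le1:
  assumes "0 < p" "lp_norm n p x = 1" "i < n" shows "cmod (x i) \<le> 1"
proof (rule ccontr)
  assume "\<not> cmod (x i) \<le> 1"
  then have "1 < cmod (x i)" by simp
  then have "1 powr p < cmod (x i) powr p" using assms(1) by (intro powr_less_mono2) auto
  also have "\<dots> \<le> (\<Sum>i<n. cmod (x i) powr p)" using assms(3) by (intro member_le_sum) auto
  finally show False using lp_sum1[OF assms(1,2)] by simp
qed

lemma lp_holder:
  assumes "0 < p" "0 < r" "0 < n" "lp_norm n p x = 1"
  shows "lp_norm n r x \<le> real n powr max (1/r - 1/p) 0"
proof (cases "p \<le> r")
  case True
  have "(\<Sum>i<n. cmod (x i) powr r) \<le> (\<Sum>i<n. cmod (x i) powr p)"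
  proof (rule sum_mono)
    fix i assume "i \<in> {..<n}"
    then have le: "cmod (x i) \<le> 1" using lp_entry_le1[OF assms(1,4)] by auto
    show "cmod (x i) powr r \<le> cmod (x i) powr p"
    proof (cases "x i = 0")
      case False
      then show ?thesis using le True by (intro powr_mono') auto
    qed simp
  qed
  also have "\<dots> = 1" using lp_sum1[OF assms(1,4)] .
  finally have "lp_norm n r x \<le> 1 powr (1/r)" unfolding lp_norm_def using assms(2)
    by (intro powr_mono2) (auto intro: sum_nonneg)
  moreover have "max (1/r - 1/p) 0 = 0" using True assms by (simp add: frac_le)
  ultimately show ?thesis using assms(3) by simp
next
  case False
  define q where "q = r / p"
  have q: "0 < q" "q < 1" using False assms unfolding q_def by auto
  have n0: "0 < real n" using assms by simp
  have each: "real n powr q * cmod (x i) powr r \<le> q * (real n * cmod (x i) powr p) + (1 - q)" for i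
  proof (cases "x i = 0")
    case True then show ?thesis using q assms(2) by simp
  next
    case False
    have "(real n * cmod (x i) powr p) powr q * 1 powr (1 - q) \<le> q * (real n * cmod (x i) powr p) + (1 - q) * 1"
      using q n0 False by (intro Youngs_inequality_0) auto
    moreover have "(real n * cmod (x i) powr p) powr q = real n powr q * cmod (x i) powr r"
      using assms(1) by (simp add: powr_mult powr_powr q_def)
    ultimately show ?thesis by simp
  qed
  have "real n powr q * (\<Sum>i<n. cmod (x i) powr r) \<le> (\<Sum>i<n. q * (real n * cmod (x i) powr p) + (1 - q))"
    unfolding sum_distrib_left by (intro sum_mono each)
  also have "\<dots> = q * real n * (\<Sum>i<n. cmod (x i) powr p) + real n * (1 - q)"
    by (simp add: sum.distrib sum_distrib_left mult.assoc)
  also have "\<dots> = real n" using lp_sum1[OF assms(1,4)] by (simp add: algebra_simps)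
  finally have "(\<Sum>i<n. cmod (x i) powr r) \<le> real n / real n powr q"
    using n0 by (simp add: le_divide_eq mult.commute)
  also have "\<dots> = real n powr (1 - q)" using n0 by (simp add: powr_diff)
  finally have "lp_norm n r x \<le> (real n powr (1 - q)) powr (1/r)" unfolding lp_norm_def using assms(2)
    by (intro powr_mono2) (auto intro: sum_nonneg)
  also have "\<dots> = real n powr ((1 - q) / r)" by (simp add: powr_powr)
  also have "(1 - q) / r = max (1/r - 1/p) 0" using False assms unfolding q_def
    by (auto simp: field_simps max_def)
  finally show ?thesis .
qed



lemma ksubsets_finite: "finite (ksubsets n k)"
proof -
  have "ksubsets n k \<subseteq> Pow {..<n}" unfolding ksubsets_def by auto
  then show ?thesis by (rule finite_subset) simp
qed

lemma ksubsets_ne: "k \<le> n \<Longrightarrow> ksubsets n k \<noteq> {}"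
proof -
  assume "k \<le> n"
  then have "{..<k} \<in> ksubsets n k" unfolding ksubsets_def by auto
  then show ?thesis by blast
qed

lemma ksub_nth:
  assumes "A \<in> ksubsets n k" "i < k"
  shows "sorted_list_of_set A ! i \<in> A" "sorted_list_of_set A ! i < n"
proof -
  have fA: "finite A" using assms(1) unfolding ksubsets_def by (auto intro: finite_subset)
  have "length (sorted_list_of_set A) = k" using assms(1) unfolding ksubsets_def by simp
  then have "sorted_list_of_set A ! i \<in> set (sorted_list_of_set A)" using assms(2) by simp
  then show "sorted_list_of_set A ! i \<in> A" using fA by simp
  then show "sorted_list_of_set A ! i < n" using assms(1) unfolding ksubsets_def by auto
qed

lemma prod_sorted:
  assumes "S \<in> ksubsets n k"
  shows "(\<Prod>i<k. d (sorted_list_of_set S ! i)) = (\<Prod>j\<in>S. d j)"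
proof -
  have fS: "finite S" using assms unfolding ksubsets_def by (auto intro: finite_subset)
  have len: "length (sorted_list_of_set S) = k" using assms unfolding ksubsets_def by simp
  have "bij_betw ((!) (sorted_list_of_set S)) {..<k} S"
    by (rule bij_betw_nth) (simp_all add: len fS, use assms in \<open>simp add: ksubsets_def\<close>)
  then show ?thesis by (simp add: prod.reindex_bij_betw)
qed

lemma minor_scale:
  assumes "S \<in> ksubsets n k" "\<And>r j. B r j = B' r j * d j"
  shows "minor k B A S = minor k B' A S * (\<Prod>j\<in>S. d j)"
proof -
  let ?a = "sorted_list_of_set A" and ?s = "sorted_list_of_set S"
  have "minor k B A S = (\<Sum>\<sigma> | \<sigma> permutes {..<k}. of_int (sign \<sigma>) *
      (\<Prod>i<k. B' (?a ! i) (?s ! \<sigma> i)) * (\<Prod>j\<in>S. d j))"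
    unfolding minor_def
  proof (rule sum.cong[OF refl])
    fix \<sigma> assume "\<sigma> \<in> {\<sigma>. \<sigma> permutes {..<k}}"
    then have sp: "\<sigma> permutes {..<k}" by simp
    have "(\<Prod>i<k. B (?a ! i) (?s ! \<sigma> i)) = (\<Prod>i<k. B' (?a ! i) (?s ! \<sigma> i)) * (\<Prod>i<k. d (?s ! \<sigma> i))"
      by (simp add: assms(2) prod.distrib)
    also have "(\<Prod>i<k. d (?s ! \<sigma> i)) = (\<Prod>i<k. d (?s ! i))"
      using prod.permute[OF sp, of "\<lambda>i. d (?s ! i)"] by (simp add: comp_def)
    also have "\<dots> = (\<Prod>j\<in>S. d j)" by (rule prod_sorted[OF assms(1)])
    finally show "of_int (sign \<sigma>) * (\<Prod>i<k. B (?a ! i) (?s ! \<sigma> i)) =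
      of_int (sign \<sigma>) * (\<Prod>i<k. B' (?a ! i) (?s ! \<sigma> i)) * (\<Prod>j\<in>S. d j)"
      by (simp add: mult.assoc)
  qed
  also have "\<dots> = minor k B' A S * (\<Prod>j\<in>S. d j)"
    unfolding minor_def by (simp add: sum_distrib_right)
  finally show ?thesis .
qed

lemma minor_bound:
  assumes "A \<in> ksubsets n k" "S \<in> ksubsets n k" "\<And>i j. i < n \<Longrightarrow> j < n \<Longrightarrow> cmod (B i j) \<le> 1"
  shows "cmod (minor k B A S) \<le> real (card {\<sigma>. \<sigma> permutes {..<k}})"
proof -
  let ?a = "sorted_list_of_set A" and ?s = "sorted_list_of_set S"
  have "cmod (minor k B A S) \<le> (\<Sum>\<sigma> | \<sigma> permutes {..<k}. cmod (of_int (sign \<sigma>) *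
      (\<Prod>i<k. B (?a ! i) (?s ! \<sigma> i))))"
    unfolding minor_def by (rule norm_sum)
  also have "\<dots> \<le> (\<Sum>\<sigma> | \<sigma> permutes {..<k}. 1)"
  proof (rule sum_mono)
    fix \<sigma> assume "\<sigma> \<in> {\<sigma>. \<sigma> permutes {..<k}}"
    then have sp: "\<sigma> permutes {..<k}" by simp
    have "cmod (\<Prod>i<k. B (?a ! i) (?s ! \<sigma> i)) = (\<Prod>i<k. cmod (B (?a ! i) (?s ! \<sigma> i)))"
      by (rule prod_norm[symmetric])
    also have "\<dots> \<le> 1"
    proof (rule prod_le_1)
      fix i assume i: "i \<in> {..<k}"
      then have "\<sigma> i < k" using permutes_in_image[OF sp] by auto
      then show "0 \<le> cmod (B (?a ! i) (?s ! \<sigma> i)) \<and> cmod (B (?a ! i) (?s ! \<sigma> i)) \<le> 1"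
        using i ksub_nth[OF assms(1)] ksub_nth[OF assms(2)] assms(3) by auto
    qed
    finally show "cmod (of_int (sign \<sigma>) * (\<Prod>i<k. B (?a ! i) (?s ! \<sigma> i))) \<le> 1"
      by (simp add: norm_mult sign_def)
  qed
  also have "\<dots> = real (card {\<sigma>. \<sigma> permutes {..<k}})" by simp
  finally show ?thesis .
qed



lemma lp_pos:
  assumes "0 < p" "0 < r" "lp_norm n p x = 1" shows "0 < lp_norm n r x"
proof -
  have S0: "0 \<le> (\<Sum>i<n. cmod (x i) powr r)" by (intro sum_nonneg) simp
  have "(\<Sum>i<n. cmod (x i) powr r) \<noteq> 0"
  proof
    assume "(\<Sum>i<n. cmod (x i) powr r) = 0"
    then have "\<forall>i\<in>{..<n}. cmod (x i) powr r = 0" by (subst (asm) sum_nonneg_eq_0_iff) auto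
    then have "\<forall>i\<in>{..<n}. cmod (x i) powr p = 0" by simp
    then have "(\<Sum>i<n. cmod (x i) powr p) = 0" by simp
    then show False using lp_sum1[OF assms(1,3)] by simp
  qed
  then show ?thesis using S0 unfolding lp_norm_def by simp
qed

lemma lp_div:
  assumes "0 < d" "0 < r"
  shows "lp_norm n r (\<lambda>i. x i / d) = lp_norm n r x / d"
proof -
  have "(\<Sum>i<n. cmod (x i / d) powr r) = (\<Sum>i<n. cmod (x i) powr r) / d powr r"
    using assms by (simp add: norm_divide powr_divide sum_divide_distrib)
  moreover have "((\<Sum>i<n. cmod (x i) powr r) / d powr r) powr (1/r) = (\<Sum>i<n. cmod (x i) powr r) powr (1/r) / d"
    using assms by (simp add: powr_divide powr_powr sum_nonneg)
  ultimately show ?thesis unfolding lp_norm_def by simp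
qed

lemma prod_le_pow:
  fixes d :: "nat \<Rightarrow> real" and c :: real
  assumes "S \<in> ksubsets n k" "\<And>j. 0 \<le> d j" "\<And>j. d j \<le> c"
  shows "(\<Prod>j\<in>S. d j) \<le> c ^ k"
proof -
  have fS: "finite S" and cS: "card S = k" using assms(1) unfolding ksubsets_def by (auto intro: finite_subset)
  have "(\<Prod>j\<in>S. d j) \<le> (\<Prod>j\<in>S. c)" by (rule prod_mono) (simp add: assms)
  then show ?thesis using cS by simp
qed

theorem lemma2p12:
  fixes n k p r :: nat and N :: "(nat set \<Rightarrow> complex) \<Rightarrow> real"
  assumes "0 < k" "k \<le> n" "0 < p" "0 < r"
    and "is_absolute_vnorm (ksubsets n k) N"
  shows "theta n k (opnorm (ksubsets n k) N) (lp_norm n (real p))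
         \<le> real n powr (max (real k / real r - real k / real p) 0)
           * theta n k (opnorm (ksubsets n k) N) (lp_norm n (real r))"
proof -
  define I where "I = ksubsets n k"
  have absN: "is_absolute_vnorm I N" using assms(5) unfolding I_def .
  have vn: "is_vnorm I N" using absN unfolding is_absolute_vnorm_def by auto
  have fin: "finite I" unfolding I_def by (rule ksubsets_finite)
  have ne: "I \<noteq> {}" unfolding I_def by (rule ksubsets_ne[OF assms(2)])
  have n0: "0 < n" using assms by simp
  have pr: "0 < real p" "0 < real r" using assms by auto
  define K0 where "K0 = real (card {\<sigma>. \<sigma> permutes {..<k}}) * N (ind I) * (\<Sum>j\<in>I. 1 / N (ev j))"
  define ops where "ops A = {N (matvec I A x) / N x | x. x \<in> vecs I \<and> x \<noteq> (\<lambda>_. 0)}" for A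
  have boundr: "bdd_above (ops (compound k B)) \<and> opnorm I N (compound k B) \<le> K0"
    if hB: "\<forall>i<n. lp_norm n (real r) (col n B i) = 1" for B
  proof -
    have ent: "cmod (B i j) \<le> 1" if "i < n" "j < n" for i j
    proof -
      have "cmod (col n B j i) \<le> 1" using lp_entry_le1[OF pr(2) hB[rule_format, OF that(2)] that(1)] .
      then show ?thesis using that by (simp add: col_def)
    qed
    have h: "N (matvec I (compound k B) x) \<le> K0 * N x" if "x \<in> vecs I" for x
      unfolding K0_def
      by (rule entry_bound[OF absN fin _ that]) (unfold compound_def I_def, rule minor_bound, auto intro: ent)
    show ?thesis unfolding ops_def using opnorm_le[OF vn ne h] by simp
  qed
  define Sr where "Sr = {opnorm I N (compound k B) | B. \<forall>i<n. lp_norm n (real r) (col n B i) = 1}"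
  have bddSr: "bdd_above Sr" unfolding Sr_def using boundr by (intro bdd_aboveI) blast
  define e1 where "e1 = max (1 / real r - 1 / real p) 0"
  define c where "c = real n powr (max (real k / real r - real k / real p) 0)"
  have c_eq: "c = (real n powr e1) ^ k"
  proof -
    have "(real n powr e1) ^ k = real n powr (e1 * real k)"
      using n0 by (simp add: powr_realpow[symmetric] powr_powr)
    also have "e1 * real k = max (real k / real r - real k / real p) 0"
    proof -
      have "e1 * real k = max ((1 / real r - 1 / real p) * real k) (0 * real k)"
        unfolding e1_def using assms(1) by (simp add: max_mult_distrib_right)
      then show ?thesis by (simp add: field_simps)
    qed
    finally show ?thesis unfolding c_def by simp
  qed
  have e1_0: "0 \<le> e1" unfolding e1_def by simp
  define Sp where "Sp = {opnorm I N (compound k B) | B. \<forall>i<n. lp_norm n (real p) (col n B i) = 1}"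
  have Sp_ne: "Sp \<noteq> {}"
  proof -
    define B0 where "B0 = (\<lambda>i j::nat. if i = j then (1::complex) else 0)"
    have "lp_norm n (real p) (col n B0 i) = 1" if "i < n" for i
    proof -
      have "(\<Sum>rr<n. cmod (col n B0 i rr) powr real p) = (\<Sum>rr<n. if rr = i then 1 else 0)"
        using pr by (intro sum.cong) (auto simp: col_def B0_def)
      also have "\<dots> = 1" using that by simp
      finally show ?thesis unfolding lp_norm_def by simp
    qed
    then show ?thesis unfolding Sp_def by blast
  qed
  have main: "opnorm I N (compound k B) \<le> c * Sup Sr"
    if hB: "\<forall>i<n. lp_norm n (real p) (col n B i) = 1" for B
  proof -
    define d where "d j = (if j < n then lp_norm n (real r) (col n B j) else 1)" for j
    have dpos: "0 < d j" for j unfolding d_def using lp_pos[OF pr(1,2)] hB by auto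
    have dle: "d j \<le> real n powr e1" for j
    proof (cases "j < n")
      case True
      then show ?thesis unfolding d_def e1_def using lp_holder[OF pr(1,2) _ hB[rule_format, OF True]] n0 by simp
    next
      case False
      then show ?thesis unfolding d_def using n0 e1_0 by (simp add: ge_one_powr_ge_zero)
    qed
    define B' where "B' rr j = B rr j / complex_of_real (d j)" for rr j
    have BB': "B rr j = B' rr j * complex_of_real (d j)" for rr j
      unfolding B'_def using dpos[of j] by simp
    have hB': "\<forall>i<n. lp_norm n (real r) (col n B' i) = 1"
    proof (intro allI impI)
      fix i assume i: "i < n"
      have "col n B' i = (\<lambda>rr. col n B i rr / complex_of_real (d i))"
        unfolding col_def B'_def by auto
      then have "lp_norm n (real r) (col n B' i) = lp_norm n (real r) (col n B i) / d i"
        using lp_div[OF dpos pr(2)] by simp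
      then show "lp_norm n (real r) (col n B' i) = 1" using dpos[of i] i unfolding d_def by simp
    qed
    have bdd': "bdd_above (ops (compound k B'))" using boundr[OF hB'] by (rule conjunct1)
    have op'_le: "opnorm I N (compound k B') \<le> Sup Sr"
      using bddSr hB' unfolding Sr_def by (intro cSup_upper) auto
    have op'_0: "0 \<le> opnorm I N (compound k B')"
      using opnorm_nonneg[OF vn ne] bdd' unfolding ops_def by blast
    have c0: "0 \<le> c" unfolding c_def by simp
    have h: "N (matvec I (compound k B) x) \<le> (c * Sup Sr) * N x" if x: "x \<in> vecs I" for x
    proof -
      define u where "u S = (if S \<in> I then (\<Prod>j\<in>S. complex_of_real (d j)) else 0)" for S
      define y where "y = (\<lambda>S. u S * x S)"
      have yv: "y \<in> vecs I" unfolding y_def by (rule vecs_mult[OF x])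
      have mv: "matvec I (compound k B) x = matvec I (compound k B') y"
        unfolding matvec_def
      proof (intro ext if_cong refl sum.cong)
        fix A S assume "S \<in> I"
        then show "compound k B A S * x S = compound k B' A S * y S"
          unfolding compound_def y_def u_def I_def
          by (simp add: minor_scale[OF _ BB'] mult.assoc)
      qed
      have uc: "cmod (u S) \<le> c" for S
      proof (cases "S \<in> I")
        case True
        have "cmod (u S) = (\<Prod>j\<in>S. d j)" using True dpos unfolding u_def
          by (simp add: prod_norm[symmetric] less_imp_le)
        also have "\<dots> \<le> (real n powr e1) ^ k"
          using True dle dpos unfolding I_def by (intro prod_le_pow) (auto intro: less_imp_le)
        finally show ?thesis using c_eq by simp
      qed (simp add: u_def c0)
      have Ny: "N y \<le> c * N x" unfolding y_def by (rule abs_scale_le[OF absN x uc])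
      have "N (matvec I (compound k B) x) = N (matvec I (compound k B') y)" by (simp add: mv)
      also have "\<dots> \<le> opnorm I N (compound k B') * N y"
        by (rule opnorm_ge[OF vn _ yv]) (use bdd' in \<open>simp add: ops_def\<close>)
      also have "\<dots> \<le> opnorm I N (compound k B') * (c * N x)"
        using Ny op'_0 by (rule mult_left_mono)
      also have "\<dots> \<le> Sup Sr * (c * N x)"
        using op'_le c0 vnorm_nonneg[OF vn x] by (intro mult_right_mono) auto
      finally show ?thesis by (simp add: ac_simps)
    qed
    show ?thesis using opnorm_le[OF vn ne h] by simp
  qed
  have "Sup Sp \<le> c * Sup Sr"
    by (rule cSup_least[OF Sp_ne]) (use main in \<open>auto simp: Sp_def\<close>)
  then show ?thesis unfolding theta_def c_def Sp_def Sr_def I_def by simp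
qed

end
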